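(* Let $A=\{a_0,a_1,\dots,a_{k-1}\}\subseteq\mathcal{C}_n$ with $a_0<a_1<\dots<a_{k-1}$, and let $\sigma=\sigma^{(n)}_k(A)$ be the corresponding $k$-simplex. Then (a) $\mathcal{DN}^{\,n-a_0-1}_0=\sigma\cap\mathcal{E}^{(a_0)}_{\mathcal{C}_n}$; (b) $\mathcal{DN}^{\,a_{k-1}}_{k-1}=\sigma\cap\mathcal{E}^{(a_{k-1})}_{\mathcal{C}_n}$.
   Context: $\mathcal{C}_n=\{0,1,\dots,n-1\}$ is the chain with its usual order; $\widehat{\mathcal{E}}_{\mathcal{C}_n}$ is the set of all order-preserving maps $\mathcal{C}_n\to\mathcal{C}_n$ (not required to fix $0$), a semiring under pointwise maximum and composition. The $k$-simplex $\sigma^{(n)}_k(A)$ is the set of all $\alpha\in\widehat{\mathcal{E}}_{\mathcal{C}_n}$ with $\mathrm{im}(\alpha)\subseteq A$. For $x\in\mathcal{C}_n$, $\overline{x}$ is the constant map with value $x$, and $\mathcal{E}^{(x)}_{\mathcal{C}_n}=\{\alpha\in\widehat{\mathcal{E}}_{\mathcal{C}_n}:\alpha(x)=x\}$. For $m\in\{0,\dots,k-1\}$ and $s\in\{0,\dots,n-1\}$, the $s$-th layer with respect to $\overline{a_m}$ is $\mathcal{L}^{s}_{a_m}=\{\alpha\in\sigma:\ |\{i\in\mathcal{C}_n:\alpha(i)=a_m\}|=s\}$. For an integer $t$ with $0\le t\le n$, the discrete neighborhood is $\mathcal{DN}^{\,t}_m=\{\overline{a_m}\}\cup\bigcup_{\ell=n-t}^{n-1}\mathcal{L}^{\ell}_{a_m}$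 (the union being empty when $t=0$). *)

theory Defs
  imports Main
begin

text \<open>Maps C_n -> C_n are represented as functions nat => nat that are
  extensional: value 0 outside {..<n}.\<close>

definition Ehat :: "nat \<Rightarrow> (nat \<Rightarrow> nat) set" where
  "Ehat n = {\<alpha>. (\<forall>i<n. \<alpha> i < n) \<and> (\<forall>i j. i \<le> j \<longrightarrow> j < n \<longrightarrow> \<alpha> i \<le> \<alpha> j)
              \<and> (\<forall>i. n \<le> i \<longrightarrow> \<alpha> i = 0)}"

definition simplex :: "nat \<Rightarrow> nat set \<Rightarrow> (nat \<Rightarrow> nat) set" where
  "simplex n A = {\<alpha> \<in> Ehat n. \<alpha> ` {..<n} \<subseteq> A}"

definition const_map :: "nat \<Rightarrow> nat \<Rightarrow> (nat \<Rightarrow> nat)" where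
  "const_map n x = (\<lambda>i. if i < n then x else 0)"

definition Efix :: "nat \<Rightarrow> nat \<Rightarrow> (nat \<Rightarrow> nat) set" where
  "Efix n x = {\<alpha> \<in> Ehat n. \<alpha> x = x}"

definition layer :: "nat \<Rightarrow> (nat \<Rightarrow> nat) set \<Rightarrow> nat \<Rightarrow> nat \<Rightarrow> (nat \<Rightarrow> nat) set" where
  "layer n \<sigma> x s = {\<alpha> \<in> \<sigma>. card {i. i < n \<and> \<alpha> i = x} = s}"

definition DN :: "nat \<Rightarrow> (nat \<Rightarrow> nat) set \<Rightarrow> nat \<Rightarrow> nat \<Rightarrow> (nat \<Rightarrow> nat) set" where
  "DN n \<sigma> x t = {const_map n x} \<union> (\<Union>l\<in>{n - t..<n}. layer n \<sigma> x l)"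

end

theory Submission
  imports Defs
begin

lemma const_in:
  assumes "x < n" "x \<in> A"
  shows "const_map n x \<in> simplex n A \<inter> Efix n x"
  using assms by (auto simp: simplex_def Ehat_def Efix_def const_map_def)

lemma card_full:
  assumes "\<alpha> \<in> Ehat n" "card {i. i < n \<and> \<alpha> i = x} \<ge> n"
  shows "\<alpha> = const_map n x"
proof -
  have "{i. i < n \<and> \<alpha> i = x} \<subseteq> {..<n}" by auto
  moreover have "card {..<n} \<le> card {i. i < n \<and> \<alpha> i = x}" using assms(2) by simp
  ultimately have "{i. i < n \<and> \<alpha> i = x} = {..<n}"
    by (metis card_seteq finite_lessThan)
  then show ?thesis using assms(1) by (auto simp: Ehat_def const_map_def fun_eq_iff)
qed

lemma card_le_n: "card {i. i < n \<and> (\<alpha>::nat\<Rightarrow>nat) i = x} \<le> n"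
proof -
  have "{i. i < n \<and> \<alpha> i = x} \<subseteq> {..<n}" by auto
  then show ?thesis by (metis card_lessThan card_mono finite_lessThan)
qed

lemma DN_char:
  assumes "x < n" "x \<in> A"
    and key: "\<And>\<alpha>. \<alpha> \<in> simplex n A \<Longrightarrow> (\<alpha> x = x \<longleftrightarrow> card {i. i < n \<and> \<alpha> i = x} \<ge> n - t)"
  shows "DN n (simplex n A) x t = simplex n A \<inter> Efix n x"
proof
  show "DN n (simplex n A) x t \<subseteq> simplex n A \<inter> Efix n x"
  proof
    fix \<alpha> assume "\<alpha> \<in> DN n (simplex n A) x t"
    then consider "\<alpha> = const_map n x" | l where "l \<in> {n - t..<n}" "\<alpha> \<in> layer n (simplex n A) x l"
      unfolding DN_def by auto
    then show "\<alpha> \<in> simplex n A \<inter> Efix n x"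
    proof cases
      case 1 then show ?thesis using const_in assms by auto
    next
      case 2
      then have "\<alpha> \<in> simplex n A" "card {i. i < n \<and> \<alpha> i = x} \<ge> n - t"
        by (auto simp: layer_def)
      then show ?thesis using key by (auto simp: Efix_def simplex_def)
    qed
  qed
next
  show "simplex n A \<inter> Efix n x \<subseteq> DN n (simplex n A) x t"
  proof
    fix \<alpha> assume a: "\<alpha> \<in> simplex n A \<inter> Efix n x"
    then have s: "\<alpha> \<in> simplex n A" and f: "\<alpha> x = x" by (auto simp: Efix_def)
    have c: "card {i. i < n \<and> \<alpha> i = x} \<ge> n - t" using key[OF s] f by simp
    show "\<alpha> \<in> DN n (simplex n A) x t"
    proof (cases "card {i. i < n \<and> \<alpha> i = x} < n")
      case True
      then show ?thesis using c s unfolding DN_def layer_def by auto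
    next
      case False
      then have "\<alpha> = const_map n x" using card_full s by (auto simp: simplex_def)
      then show ?thesis unfolding DN_def by auto
    qed
  qed
qed

theorem theorem5:
  fixes n k :: nat and a :: "nat \<Rightarrow> nat"
  assumes "k \<ge> 1"
    and "\<And>i j. i < j \<Longrightarrow> j < k \<Longrightarrow> a i < a j"
    and "\<And>i. i < k \<Longrightarrow> a i < n"
  defines "A \<equiv> a ` {..<k}"
  defines "\<sigma> \<equiv> simplex n A"
  shows "DN n \<sigma> (a 0) (n - a 0 - 1) = \<sigma> \<inter> Efix n (a 0)
         \<and> DN n \<sigma> (a (k - 1)) (a (k - 1)) = \<sigma> \<inter> Efix n (a (k - 1))"
proof -
  have mono: "\<And>i j. i \<le> j \<Longrightarrow> j < k \<Longrightarrow> a i \<le> a j"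
    using assms(2) by (metis le_neq_implies_less order.order_iff_strict)
  have a0n: "a 0 < n" and Mn: "a (k-1) < n" using assms(1,3) by auto
  have a0A: "a 0 \<in> A" and MA: "a (k-1) \<in> A" using assms(1) unfolding A_def by auto
  have lo: "\<And>\<alpha> i. \<alpha> \<in> \<sigma> \<Longrightarrow> i < n \<Longrightarrow> a 0 \<le> \<alpha> i \<and> \<alpha> i \<le> a (k-1)"
  proof -
    fix \<alpha> i assume "\<alpha> \<in> \<sigma>" "i < n"
    then have "\<alpha> i \<in> A" unfolding \<sigma>_def simplex_def by auto
    then obtain j where "j < k" "\<alpha> i = a j" unfolding A_def by auto
    then show "a 0 \<le> \<alpha> i \<and> \<alpha> i \<le> a (k-1)" using mono by auto
  qed
  have monoa: "\<And>\<alpha> i j. \<alpha> \<in> \<sigma> \<Longrightarrow> i \<le> j \<Longrightarrow> j < n \<Longrightarrow> \<alpha> i \<le> \<alpha> j"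
    unfolding \<sigma>_def simplex_def Ehat_def by auto
  have P1: "DN n \<sigma> (a 0) (n - a 0 - 1) = \<sigma> \<inter> Efix n (a 0)"
    unfolding \<sigma>_def
  proof (rule DN_char[OF a0n a0A])
    fix \<alpha> assume s: "\<alpha> \<in> simplex n A"
    hence s': "\<alpha> \<in> \<sigma>" using \<sigma>_def by simp
    let ?S = "{i. i < n \<and> \<alpha> i = a 0}"
    have e: "n - (n - a 0 - 1) = a 0 + 1" using a0n by simp
    show "\<alpha> (a 0) = a 0 \<longleftrightarrow> card ?S \<ge> n - (n - a 0 - 1)"
      unfolding e
    proof
      assume h: "\<alpha> (a 0) = a 0"
      have "{..a 0} \<subseteq> ?S"
      proof
        fix i assume "i \<in> {..a 0}"
        then have "i \<le> a 0" by simp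
        then show "i \<in> ?S" using monoa[OF s' _ a0n, of i] lo[OF s', of i] h a0n by auto
      qed
      moreover have "finite ?S" by simp
      ultimately have "card {..a 0} \<le> card ?S" by (rule card_mono[rotated])
      then show "card ?S \<ge> a 0 + 1" by simp
    next
      assume h: "card ?S \<ge> a 0 + 1"
      have "\<not> ?S \<subseteq> {..<a 0}"
      proof
        assume "?S \<subseteq> {..<a 0}"
        then have "card ?S \<le> a 0" by (metis card_lessThan card_mono finite_lessThan)
        with h show False by simp
      qed
      then obtain i where "i < n" "\<alpha> i = a 0" "a 0 \<le> i" using leI by blast
      then show "\<alpha> (a 0) = a 0" using monoa[OF s', of "a 0" i] lo[OF s' a0n] by auto
    qed
  qed
  have P2: "DN n \<sigma> (a (k-1)) (a (k-1)) = \<sigma> \<inter> Efix n (a (k-1))"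
    unfolding \<sigma>_def
  proof (rule DN_char[OF Mn MA])
    fix \<alpha> assume s: "\<alpha> \<in> simplex n A"
    hence s': "\<alpha> \<in> \<sigma>" using \<sigma>_def by simp
    let ?M = "a (k-1)"
    let ?S = "{i. i < n \<and> \<alpha> i = ?M}"
    show "\<alpha> ?M = ?M \<longleftrightarrow> card ?S \<ge> n - ?M"
    proof
      assume h: "\<alpha> ?M = ?M"
      have "{?M..<n} \<subseteq> ?S"
      proof
        fix i assume "i \<in> {?M..<n}"
        then show "i \<in> ?S" using monoa[OF s', of ?M i] lo[OF s', of i] h by auto
      qed
      moreover have "finite ?S" by simp
      ultimately have "card {?M..<n} \<le> card ?S" by (rule card_mono[rotated])
      then show "card ?S \<ge> n - ?M" by simp
    next
      assume h: "card ?S \<ge> n - ?M"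
      have "\<not> ?S \<subseteq> {Suc ?M..<n}"
      proof
        assume "?S \<subseteq> {Suc ?M..<n}"
        then have "card ?S \<le> n - Suc ?M" by (metis card_atLeastLessThan card_mono finite_atLeastLessThan)
        with h Mn show False by simp
      qed
      then obtain i where "i < n" "\<alpha> i = ?M" "i \<le> ?M" using not_less_eq_eq by (auto simp: subset_iff)
      then show "\<alpha> ?M = ?M" using monoa[OF s', of i ?M] lo[OF s' Mn] Mn by auto
    qed
  qed
  show ?thesis using P1 P2 by simp
qed

end
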